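(* For every positive integer $m$, $$G_{-m}(\lambda)=(1+\zeta)^{m+1}\sum_{k=1}^m\left\{\!\left\{{m+k\atop k}\right\}\!\right\}\zeta^k,\qquad\text{where }\zeta=\frac{\lambda}{1-\lambda},$$ as an identity of formal power series (equivalently, of rational functions) in $\lambda$.
   Context: For an integer $m$ let $R_m(z)=\sum_{n\ge1} n^{n-m}\frac{z^n}{n!}$. Let $T(z)=\sum_{n\ge1}n^{n-1}\frac{z^n}{n!}$, which satisfies $T(z)=z e^{T(z)}$, so its compositional inverse is $z=\lambda e^{-\lambda}$. Define $G_m(\lambda):=R_m(\lambda e^{-\lambda})$, so $G_m(T(z))=R_m(z)$; then $\zeta=\lambda/(1-\lambda)$ equals $G_0(\lambda)$. The second-order Stirling numbers (associated Stirling numbers of the second kind) $\{\{{n\atop k}\}\}$ are the numbers of partitions of an $n$-element set into $k$ blocks each of size at least $2$; equivalently $\{\{{0\atop 0}\}\}=1$, $\{\{{n\atop k}\}\}=0$ when $n<0$ or $k\le 0$ with $(n,k)\neq(0,0)$, and $\{\{{n\atop k}\}\}=k\{\{{n-1\atop k}\}\}+(n-1)\{\{{n-2\atop k-1}\}\}$ for $n\ge1$. *)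

theory Defs
  imports "HOL-Computational_Algebra.Formal_Power_Series"
begin

definition R :: "int \<Rightarrow> real fps" where
  "R m = Abs_fps (\<lambda>n. if n = 0 then 0 else (of_nat n) powi (int n - m) / fact n)"

definition G :: "int \<Rightarrow> real fps" where
  "G m = fps_compose (R m) (fps_X * fps_exp (-1))"

definition zeta :: "real fps" where
  "zeta = fps_X * inverse (1 - fps_X)"

fun assoc_stirling :: "nat \<Rightarrow> nat \<Rightarrow> nat" where
  "assoc_stirling 0 k = (if k = 0 then 1 else 0)"
| "assoc_stirling (Suc 0) k = k * assoc_stirling 0 k"
| "assoc_stirling (Suc (Suc n)) 0 = 0"
| "assoc_stirling (Suc (Suc n)) (Suc k) =
     Suc k * assoc_stirling (Suc n) (Suc k) + Suc n * assoc_stirling n k"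

end

theory Submission
  imports Defs
begin

unbundle fps_syntax

lemma findiff:
  fixes N k :: nat
  assumes "k < N"
  shows "(\<Sum>n\<le>N. (-1::real)^n * of_nat (N choose n) * of_nat n ^ k) = 0"
proof -
  define E where "E = fps_exp (1::real)"
  have z: "(1 - E)^N $ k = 0"
    using startsby_zero_power_prefix[of "1 - E" N] assms by (simp add: E_def)
  have "(1 - E)^N = (-E + 1)^N" by simp
  also have "\<dots> = (\<Sum>n\<le>N. of_nat (N choose n) * (-E)^n * 1^(N-n))"
    by (rule binomial_ring)
  also have "\<dots> = (\<Sum>n\<le>N. fps_const ((-1)^n * of_nat (N choose n)) * fps_exp (of_nat n))"
  proof (rule sum.cong[OF refl])
    fix n
    have "(-E)^n = fps_const ((-1)^n) * E^n"
      by (metis fps_const_neg fps_const_power fps_const_1_eq_1 mult_minus1 power_mult_distrib)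
    then show "of_nat (N choose n) * (-E)^n * 1^(N-n) = fps_const ((-1)^n * of_nat (N choose n)) * fps_exp (of_nat n)"
      by (simp add: E_def fps_exp_power_mult fps_of_nat[symmetric] fps_const_mult[symmetric] mult_ac del: fps_const_mult)
  qed
  finally have "(\<Sum>n\<le>N. fps_const ((-1::real)^n * of_nat (N choose n)) * fps_exp (real n)) $ k = 0"
    using z by simp
  then have "(\<Sum>n\<le>N. (-1)^n * of_nat (N choose n) * of_nat n ^ k / fact k) = (0::real)"
    by (simp add: fps_sum_nth)
  then have "(\<Sum>n\<le>N. (-1)^n * of_nat (N choose n) * of_nat n ^ k) / fact k = (0::real)"
    by (simp add: sum_divide_distrib)
  then show ?thesis by simp
qed


lemma g_power_nth:
  "((fps_X * fps_exp (-1::real)) ^ i) $ N = (if N < i then 0 else (- real i)^(N-i) / fact (N-i))"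
  by (simp add: power_mult_distrib fps_exp_power_mult fps_X_power_mult_nth)

lemma R1_nth: "R 1 $ i = (if i = 0 then 0 else real i ^ (i - 1) / fact i)"
proof -
  have "i \<noteq> 0 \<Longrightarrow> real i powi (int i - 1) = real i ^ (i - 1)"
    by (metis of_nat_1 of_nat_diff One_nat_def Suc_leI not_gr_zero power_int_of_nat)
  then show ?thesis by (simp add: R_def)
qed

lemma G1: "G 1 = fps_X"
proof (rule fps_ext)
  fix N
  have e: "G 1 $ N = (\<Sum>i=0..N. R 1 $ i * ((fps_X * fps_exp (-1::real)) ^ i) $ N)"
    by (simp add: G_def fps_compose_nth)
  show "G 1 $ N = fps_X $ N"
  proof (cases "N \<le> 1")
    case True
    then consider "N = 0" | "N = 1" by linarith
    then show ?thesis unfolding e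
      by cases (simp_all add: R1_nth g_power_nth)
  next
    case False
    have t: "R 1 $ i * ((fps_X * fps_exp (-1::real)) ^ i) $ N
        = (-1)^N / fact N * ((-1)^i * of_nat (N choose i) * of_nat i ^ (N - 1))"
      if i: "i \<in> {..N}" for i
    proof (cases "i = 0")
      case True then show ?thesis using False by (simp add: R1_nth g_power_nth)
    next
      case i0: False
      have iN: "i \<le> N" using i by simp
      have p1: "real i ^ (i - 1) * real i ^ (N - i) = real i ^ (N - 1)"
        using iN i0 by (simp flip: power_add)
      have p2: "(-1::real)^(N-i) = (-1)^N * (-1)^i"
      proof -
        have "(-1::real)^N * (-1)^i = (-1)^(N+i)" by (simp add: power_add)
        also have "N + i = (N - i) + 2*i" using iN by simp
        also have "(-1::real)^((N - i) + 2*i) = (-1)^(N-i)"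
          by (simp only: power_add power_mult) simp
        finally show ?thesis by simp
      qed
      have "R 1 $ i * ((fps_X * fps_exp (-1::real)) ^ i) $ N
          = real i ^ (i - 1) / fact i * ((-1)^(N-i) * real i ^ (N-i) / fact (N-i))"
        using iN i0 by (simp add: R1_nth g_power_nth power_minus')
      also have "\<dots> = (-1)^(N-i) * (real i ^ (i - 1) * real i ^ (N - i)) / (fact i * fact (N-i))"
        by simp
      also have "\<dots> = (-1)^N * (-1)^i * real i ^ (N - 1) / (fact i * fact (N-i))"
        using p1 p2 by simp
      also have "\<dots> = (-1)^N / fact N * ((-1)^i * (fact N / (fact i * fact (N-i))) * real i ^ (N - 1))"
        by (simp add: field_simps)
      also have "\<dots> = (-1)^N / fact N * ((-1)^i * real (N choose i) * real i ^ (N - 1))"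
        by (simp only: binomial_fact[OF iN])
      finally show ?thesis .
    qed
    have "G 1 $ N = (\<Sum>i\<le>N. R 1 $ i * ((fps_X * fps_exp (-1::real)) ^ i) $ N)"
      using e atLeast0AtMost by simp
    also have "\<dots> = (-1)^N / fact N * (\<Sum>i\<le>N. (-1)^i * of_nat (N choose i) * of_nat i ^ (N - 1))"
      using t by (simp add: sum_distrib_left)
    also have "\<dots> = 0" using findiff[of "N - 1" N] False by simp
    finally show ?thesis using False by simp
  qed
qed


lemma R_rec: "R (m - 1) = fps_X * fps_deriv (R m)"
proof (rule fps_ext)
  fix n
  show "R (m - 1) $ n = (fps_X * fps_deriv (R m)) $ n"
  proof (cases n)
    case 0 then show ?thesis by (simp add: R_def)
  next
    case (Suc k)
    have "real (Suc k) powi (int (Suc k) - (m - 1)) = real (Suc k) powi (int (Suc k) - m + 1)"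
      by (simp add: algebra_simps)
    also have "\<dots> = real (Suc k) * real (Suc k) powi (int (Suc k) - m)"
      by (rule power_int_add_1') simp
    finally show ?thesis using Suc by (simp add: R_def)
  qed
qed

definition gg :: "real fps" where "gg = fps_X * fps_exp (-1)"

lemma gg0: "gg $ 0 = 0" by (simp add: gg_def)

lemma gg_deriv: "fps_deriv gg = fps_exp (-1) * (1 - fps_X)"
  by (simp add: gg_def algebra_simps fps_const_neg[symmetric] del: fps_const_neg)

lemma inv_1X: "inverse (1 - fps_X :: real fps) * (1 - fps_X) = 1"
  by (rule inverse_mult_eq_1) simp

lemma G_rec: "G (m - 1) = zeta * fps_deriv (G m)"
proof -
  have GG: "G k = R k oo gg" for k by (simp add: G_def gg_def)
  have "G (m - 1) = (fps_X oo gg) * (fps_deriv (R m) oo gg)"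
    by (simp add: GG R_rec fps_compose_mult_distrib[OF gg0])
  also have "\<dots> = gg * (fps_deriv (R m) oo gg)"
    using gg0 by simp
  also have "\<dots> = fps_X * fps_exp (-1) * (inverse (1 - fps_X) * (1 - fps_X)) * (fps_deriv (R m) oo gg)"
    by (simp add: inv_1X gg_def)
  also have "\<dots> = zeta * ((fps_deriv (R m) oo gg) * fps_deriv gg)"
    by (simp add: zeta_def gg_deriv mult_ac)
  also have "\<dots> = zeta * fps_deriv (G m)"
    by (simp add: GG fps_compose_deriv[OF gg0])
  finally show ?thesis .
qed

lemma G0: "G 0 = zeta"
  using G_rec[of 1] by (simp add: G1)

lemma one_zeta: "1 + zeta = inverse (1 - fps_X)"
proof -
  have "zeta = fps_X * inverse (1 - fps_X)" by (simp add: zeta_def)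
  have "1 + zeta = (1 - fps_X + fps_X) * inverse (1 - fps_X)"
    using inv_1X by (simp add: zeta_def algebra_simps)
  also have "\<dots> = inverse (1 - fps_X)" by simp
  finally show ?thesis .
qed

lemma zeta_deriv: "fps_deriv zeta = (1 + zeta)^2"
proof -
  have "fps_deriv zeta = fps_deriv (1 + zeta)" by simp
  also have "\<dots> = (1 + zeta)^2" unfolding one_zeta
    by (subst fps_inverse_deriv) simp_all
  finally show ?thesis .
qed


lemma S_zero: "n < 2 * k \<Longrightarrow> assoc_stirling n k = 0"
  by (induction n k rule: assoc_stirling.induct) auto

lemma S_0: "n \<ge> 1 \<Longrightarrow> assoc_stirling n 0 = 0"
proof (cases n)
  case (Suc n')
  then show ?thesis by (cases n') auto
qed simp

lemma S_rec: "k \<ge> 1 \<Longrightarrow> assoc_stirling (Suc (Suc n)) k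
    = k * assoc_stirling (Suc n) k + Suc n * assoc_stirling n (k - 1)"
  by (cases k) auto

definition QQ :: "nat \<Rightarrow> 'a::comm_ring_1 \<Rightarrow> 'a" where
  "QQ m z = (\<Sum>k = 1..m. of_nat (assoc_stirling (m + k) k) * z ^ k)"

definition DD :: "nat \<Rightarrow> 'a::comm_ring_1 \<Rightarrow> 'a" where
  "DD m z = (\<Sum>k = 1..m. of_nat (k * assoc_stirling (m + k) k) * z ^ (k - 1))"

lemma QQ_step:
  fixes z :: "'a::comm_ring_1"
  assumes m: "m \<ge> 1"
  shows "of_nat (m + 1) * z * QQ m z + z * (1 + z) * DD m z = QQ (m + 1) z"
proof -
  define S where "S = assoc_stirling"
  have zD: "z * DD m z = (\<Sum>k = 1..m. of_nat (k * S (m + k) k) * z ^ k)"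
    unfolding DD_def S_def sum_distrib_left
    by (rule sum.cong[OF refl]) (auto simp: power_eq_if mult_ac)
  have "of_nat (m + 1) * z * QQ m z + z * (1 + z) * DD m z
      = (\<Sum>k = 1..m. of_nat (k * S (m + k) k) * z ^ k)
        + (\<Sum>k = 1..m. of_nat ((m + k + 1) * S (m + k) k) * z ^ (k + 1))"
  proof -
    have a: "of_nat (m + 1) * z * QQ m z = (\<Sum>k = 1..m. of_nat ((m + 1) * S (m + k) k) * z ^ (k + 1))"
      unfolding QQ_def S_def sum_distrib_left
      by (rule sum.cong[OF refl]) (simp add: algebra_simps)
    have b: "z * (1 + z) * DD m z = (\<Sum>k = 1..m. of_nat (k * S (m + k) k) * z ^ k)
        + (\<Sum>k = 1..m. of_nat (k * S (m + k) k) * z ^ (k + 1))"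
    proof -
      have "z * (1 + z) * DD m z = z * DD m z + z * (z * DD m z)" by (simp add: algebra_simps)
      also have "z * (z * DD m z) = (\<Sum>k = 1..m. of_nat (k * S (m + k) k) * z ^ (k + 1))"
        unfolding zD sum_distrib_left by (rule sum.cong[OF refl]) (simp add: mult_ac)
      finally show ?thesis using zD by simp
    qed
    have c: "(\<Sum>k = 1..m. of_nat ((m + 1) * S (m + k) k) * z ^ (k + 1))
        + (\<Sum>k = 1..m. of_nat (k * S (m + k) k) * z ^ (k + 1))
        = (\<Sum>k = 1..m. of_nat ((m + k + 1) * S (m + k) k) * (z::'a) ^ (k + 1))"
      by (simp add: algebra_simps flip: sum.distrib)
    show ?thesis unfolding a b using c by (simp add: algebra_simps)
  qed
  also have "\<dots> = QQ (m + 1) z"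
  proof -
    have r: "S (m + 1 + k) k = k * S (m + k) k + (m + k) * S (m + k - 1) (k - 1)" if "k \<ge> 1" for k
    proof -
      have "m + 1 + k = Suc (Suc (m + k - 1))" using that by simp
      then show ?thesis unfolding S_def using S_rec[OF that, of "m + k - 1"] that
        by (simp add: Suc_diff_le)
    qed
    have "QQ (m + 1) z = (\<Sum>k = 1..m+1. of_nat (k * S (m + k) k) * z ^ k)
        + (\<Sum>k = 1..m+1. of_nat ((m + k) * S (m + k - 1) (k - 1)) * z ^ k)"
      unfolding QQ_def S_def[symmetric] sum.distrib[symmetric]
    proof (rule sum.cong[OF refl])
      fix k assume "k \<in> {1..m+1}"
      then have k1: "k \<ge> 1" by simp
      show "of_nat (S (m + 1 + k) k) * z ^ k = of_nat (k * S (m + k) k) * z ^ k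
          + of_nat ((m + k) * S (m + k - 1) (k - 1)) * z ^ k"
        unfolding r[OF k1] by (simp add: algebra_simps)
    qed
    also have "(\<Sum>k = 1..m+1. of_nat (k * S (m + k) k) * z ^ k)
        = (\<Sum>k = 1..m. of_nat (k * S (m + k) k) * z ^ k)"
      using S_zero[of "m + (m + 1)" "m + 1"] by (simp add: S_def)
    also have "(\<Sum>k = 1..m+1. of_nat ((m + k) * S (m + k - 1) (k - 1)) * z ^ k)
        = (\<Sum>j = 0..m. of_nat ((m + j + 1) * S (m + j) j) * z ^ (j + 1))"
      using sum.shift_bounds_cl_Suc_ivl[of "\<lambda>k. of_nat ((m + k) * S (m + k - 1) (k - 1)) * z ^ k" 0 m]
      by (simp add: algebra_simps)
    also have "\<dots> = (\<Sum>j = 1..m. of_nat ((m + j + 1) * S (m + j) j) * z ^ (j + 1))"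
      using S_0[OF m] by (simp add: sum.atLeast_Suc_atMost S_def)
    finally show ?thesis by simp
  qed
  finally show ?thesis .
qed


lemma QQ_deriv: "fps_deriv (QQ m (z :: real fps)) = DD m z * fps_deriv z"
  unfolding QQ_def DD_def fps_deriv_sum sum_distrib_right
  by (rule sum.cong[OF refl]) (simp add: fps_deriv_power' mult_ac)

lemma main: "m \<ge> 1 \<Longrightarrow> G (- int m) = (1 + zeta) ^ (m + 1) * QQ m zeta"
proof (induction m rule: dec_induct)
  case base
  have "G (- int 1) = G (0 - 1)" by simp
  also have "\<dots> = zeta * (1 + zeta)^2" by (simp only: G_rec G0 zeta_deriv)
  finally show ?case by (simp add: QQ_def numeral_2_eq_2 mult_ac)
next
  case (step m)
  have m1: "m \<ge> 1" using step by simp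
  have "- int (Suc m) = - int m - 1" by simp
  then have "G (- int (Suc m)) = G (- int m - 1)" by (simp only:)
  also have "\<dots> = zeta * fps_deriv ((1 + zeta) ^ (m + 1) * QQ m zeta)"
    by (simp only: G_rec step.IH)
  also have "\<dots> = zeta * (of_nat (m + 1) * (1 + zeta)^2 * (1 + zeta)^m * QQ m zeta
      + (1 + zeta)^(m+1) * (DD m zeta * (1 + zeta)^2))"
    by (simp add: fps_deriv_power' QQ_deriv zeta_deriv del: power_Suc of_nat_Suc)
  also have "\<dots> = (1 + zeta)^(m + 2) * (of_nat (m + 1) * zeta * QQ m zeta + zeta * (1 + zeta) * DD m zeta)"
    by (simp add: algebra_simps power2_eq_square)
  also have "\<dots> = (1 + zeta)^(Suc m + 1) * QQ (Suc m) zeta"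
    using QQ_step[OF m1, of zeta] by simp
  finally show ?case .
qed

theorem proposition1:
  fixes m :: nat
  assumes "m \<ge> 1"
  shows "G (- int m) = (1 + zeta) ^ (m + 1) *
           (\<Sum>k = 1..m. of_nat (assoc_stirling (m + k) k) * zeta ^ k)"
  using main[OF assms] by (simp add: QQ_def)

end
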